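(* Let $\mathcal A$ be a linearly ordered $\mathbf{IUL}_\omega$-algebra. Let $B\subseteq A$ be such that $\{e,f,\bot,\top\}\subseteq B$ and $\neg b\in B$ for all $b\in B$. Let $M$, $\bar D$, $D$ and the operations be as described in the context. Then: (i) $(b]=\sim\sim(b]$ for all $b\in B$; (ii) $(a\mapsto b]=\sim\sim(a\mapsto b]$ for all $(a\mapsto b]\in\bar D$; (iii) $X=\sim\sim X$ for all $X\in D$; (iv) $\mathcal D=\langle D,\cdot^D,\to^D,\vee^D,\wedge^D,e^D,f^D,\bot^D,\top^D\rangle$ is an $\mathbf{IUL}_\omega$-algebra.
   Context: A $\mathbf{UL}$-algebra is a structure $\langle A,\wedge,\vee,\cdot,\to,e,f,\bot,\top\rangle$ such that: - it is a bounded lattice; - $\langle A,\cdot,e\rangle$ is a commutative monoid; - $xy\le z$ iff $y\le x\to z$; - for all $x,y,u,v$: $\lambda_u((x\vee y)\to x)\vee\lambda_v((x\vee y)\to y)=e$, where $\lambda_a(b)=(a\to ba)\wedge e$. An $\mathbf{IUL}_\omega$-algebra is a $\mathbf{UL}$-algebra with $\neg\neg x=x$ (where $\neg x=x\to f$) and $x\to e=x^2\to e$ for all $x$. Construction. $M$ is the submonoid of $\langle A,\cdot,e\rangle$ generated by $B$. For $a\in M$ and $b\in B$, put $(a\mapsto b]=\{c\in M: ac\le b\}$. Let $\bar D=\{(a\mapsto b]:a\in M,b\in B\}$ and $D=\{\bigcap\chi:\chi\subseteq\bar D\}$, with the empty intersection equal to $M$. For $X\subseteq M$, $C(X)$ is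 the intersection of all members of $\bar D$ containing $X$. For $b\in A$, $(b]=\{c\in M:c\le b\}$. For $X,Y\subseteq M$ and $X_i\subseteq M$: - $X\cdot^DY=C(\{xy:x\in X,y\in Y\})$; - $X\to^DY=\{a\in M: Xa\subseteq Y\}$, where $Xa=\{xa:x\in X\}$; - $\bigvee^D_iX_i=C(\bigcup_iX_i)$ and $\bigwedge^D_iX_i=\bigcap_iX_i$; - $e^D=(e]$, $f^D=(f]$, $\bot^D=(\bot]$, $\top^D=(\top]=M$; - $\sim X=X\to^D(f]$. *)

theory Defs
  imports Main
begin

record 'a ul_struct =
  carrier :: "'a set"
  meet :: "'a \<Rightarrow> 'a \<Rightarrow> 'a"
  join :: "'a \<Rightarrow> 'a \<Rightarrow> 'a"
  mult :: "'a \<Rightarrow> 'a \<Rightarrow> 'a"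
  imp  :: "'a \<Rightarrow> 'a \<Rightarrow> 'a"
  unit :: "'a"
  ff   :: "'a"
  bot  :: "'a"
  top  :: "'a"

definition leq :: "('a, 'b) ul_struct_scheme \<Rightarrow> 'a \<Rightarrow> 'a \<Rightarrow> bool" where
  "leq S x y \<longleftrightarrow> meet S x y = x"

definition bounded_lattice_on :: "('a, 'b) ul_struct_scheme \<Rightarrow> bool" where
  "bounded_lattice_on S \<longleftrightarrow>
    (\<forall>x\<in>carrier S. \<forall>y\<in>carrier S. meet S x y \<in> carrier S \<and> join S x y \<in> carrier S) \<and>
    (\<forall>x\<in>carrier S. \<forall>y\<in>carrier S. meet S x y = meet S y x \<and> join S x y = join S y x) \<and>
    (\<forall>x\<in>carrier S. \<forall>y\<in>carrier S. \<forall>z\<in>carrier S.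
        meet S (meet S x y) z = meet S x (meet S y z) \<and> join S (join S x y) z = join S x (join S y z)) \<and>
    (\<forall>x\<in>carrier S. \<forall>y\<in>carrier S. meet S x (join S x y) = x \<and> join S x (meet S x y) = x) \<and>
    bot S \<in> carrier S \<and> top S \<in> carrier S \<and>
    (\<forall>x\<in>carrier S. leq S (bot S) x \<and> leq S x (top S))"

definition comm_monoid_on :: "('a, 'b) ul_struct_scheme \<Rightarrow> bool" where
  "comm_monoid_on S \<longleftrightarrow>
    unit S \<in> carrier S \<and>
    (\<forall>x\<in>carrier S. \<forall>y\<in>carrier S. mult S x y \<in> carrier S) \<and>
    (\<forall>x\<in>carrier S. \<forall>y\<in>carrier S. \<forall>z\<in>carrier S. mult S (mult S x y) z = mult S x (mult S y z)) \<and>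
    (\<forall>x\<in>carrier S. \<forall>y\<in>carrier S. mult S x y = mult S y x) \<and>
    (\<forall>x\<in>carrier S. mult S (unit S) x = x)"

definition conj_lam :: "('a, 'b) ul_struct_scheme \<Rightarrow> 'a \<Rightarrow> 'a \<Rightarrow> 'a" where
  "conj_lam S a b = meet S (imp S a (mult S b a)) (unit S)"

definition UL_algebra :: "('a, 'b) ul_struct_scheme \<Rightarrow> bool" where
  "UL_algebra S \<longleftrightarrow>
    bounded_lattice_on S \<and> comm_monoid_on S \<and> ff S \<in> carrier S \<and>
    (\<forall>x\<in>carrier S. \<forall>y\<in>carrier S. imp S x y \<in> carrier S) \<and>
    (\<forall>x\<in>carrier S. \<forall>y\<in>carrier S. \<forall>z\<in>carrier S.
        leq S (mult S x y) z \<longleftrightarrow> leq S y (imp S x z)) \<and>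
    (\<forall>x\<in>carrier S. \<forall>y\<in>carrier S. \<forall>u\<in>carrier S. \<forall>v\<in>carrier S.
        join S (conj_lam S u (imp S (join S x y) x)) (conj_lam S v (imp S (join S x y) y)) = unit S)"

definition neg :: "('a, 'b) ul_struct_scheme \<Rightarrow> 'a \<Rightarrow> 'a" where
  "neg S x = imp S x (ff S)"

definition IUL_omega_algebra :: "('a, 'b) ul_struct_scheme \<Rightarrow> bool" where
  "IUL_omega_algebra S \<longleftrightarrow> UL_algebra S \<and>
    (\<forall>x\<in>carrier S. neg S (neg S x) = x) \<and>
    (\<forall>x\<in>carrier S. imp S x (unit S) = imp S (mult S x x) (unit S))"

definition linearly_ordered :: "('a, 'b) ul_struct_scheme \<Rightarrow> bool" where
  "linearly_ordered S \<longleftrightarrow> (\<forall>x\<in>carrier S. \<forall>y\<in>carrier S. leq S x y \<or> leq S y x)"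

inductive_set gen_monoid :: "('a, 'b) ul_struct_scheme \<Rightarrow> 'a set \<Rightarrow> 'a set"
  for S :: "('a, 'b) ul_struct_scheme" and B :: "'a set" where
  gen_unit: "unit S \<in> gen_monoid S B"
| gen_base: "b \<in> B \<Longrightarrow> b \<in> gen_monoid S B"
| gen_mult: "a \<in> gen_monoid S B \<Longrightarrow> c \<in> gen_monoid S B \<Longrightarrow> mult S a c \<in> gen_monoid S B"

text \<open>(a \<mapsto> b] = {c \<in> M. ac \<le> b}\<close>
definition rint :: "('a, 'b) ul_struct_scheme \<Rightarrow> 'a set \<Rightarrow> 'a \<Rightarrow> 'a \<Rightarrow> 'a set" where
  "rint S B a b = {c \<in> gen_monoid S B. leq S (mult S a c) b}"

definition down :: "('a, 'b) ul_struct_scheme \<Rightarrow> 'a set \<Rightarrow> 'a \<Rightarrow> 'a set" where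
  "down S B b = {c \<in> gen_monoid S B. leq S c b}"

definition Dbar :: "('a, 'b) ul_struct_scheme \<Rightarrow> 'a set \<Rightarrow> 'a set set" where
  "Dbar S B = {rint S B a b | a b. a \<in> gen_monoid S B \<and> b \<in> B}"

definition Dsets :: "('a, 'b) ul_struct_scheme \<Rightarrow> 'a set \<Rightarrow> 'a set set" where
  "Dsets S B = {gen_monoid S B \<inter> \<Inter>\<chi> | \<chi>. \<chi> \<subseteq> Dbar S B}"

definition Ccl :: "('a, 'b) ul_struct_scheme \<Rightarrow> 'a set \<Rightarrow> 'a set \<Rightarrow> 'a set" where
  "Ccl S B X = gen_monoid S B \<inter> \<Inter>{Y \<in> Dbar S B. X \<subseteq> Y}"

definition multD :: "('a, 'b) ul_struct_scheme \<Rightarrow> 'a set \<Rightarrow> 'a set \<Rightarrow> 'a set \<Rightarrow> 'a set" where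
  "multD S B X Y = Ccl S B {mult S x y | x y. x \<in> X \<and> y \<in> Y}"

definition impD :: "('a, 'b) ul_struct_scheme \<Rightarrow> 'a set \<Rightarrow> 'a set \<Rightarrow> 'a set \<Rightarrow> 'a set" where
  "impD S B X Y = {a \<in> gen_monoid S B. (\<lambda>x. mult S x a) ` X \<subseteq> Y}"

definition joinD :: "('a, 'b) ul_struct_scheme \<Rightarrow> 'a set \<Rightarrow> 'a set \<Rightarrow> 'a set \<Rightarrow> 'a set" where
  "joinD S B X Y = Ccl S B (X \<union> Y)"

definition meetD :: "'a set \<Rightarrow> 'a set \<Rightarrow> 'a set" where
  "meetD X Y = X \<inter> Y"

definition tnegD :: "('a, 'b) ul_struct_scheme \<Rightarrow> 'a set \<Rightarrow> 'a set \<Rightarrow> 'a set" where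
  "tnegD S B X = impD S B X (down S B (ff S))"

definition Dalg :: "('a, 'b) ul_struct_scheme \<Rightarrow> 'a set \<Rightarrow> 'a set ul_struct" where
  "Dalg S B = \<lparr> carrier = Dsets S B, meet = meetD, join = joinD S B,
     mult = multD S B, imp = impD S B, unit = down S B (unit S), ff = down S B (ff S),
     bot = down S B (bot S), top = down S B (top S) \<rparr>"

end

theory Submission
  imports Defs
begin

locale LL =
  fixes S :: "'a ul_struct" and B :: "'a set"
  assumes iul: "IUL_omega_algebra S" and lin: "linearly_ordered S"
    and BA: "B \<subseteq> carrier S"
    and Bc: "{unit S, ff S, bot S, top S} \<subseteq> B"
    and Bneg: "\<forall>b\<in>B. neg S b \<in> B"
begin

abbreviation "A \<equiv> carrier S"
abbreviation "M \<equiv> gen_monoid S B"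
abbreviation "le \<equiv> leq S"
abbreviation "mu \<equiv> mult S"

lemma UL0: "UL_algebra S" using iul unfolding IUL_omega_algebra_def by blast
lemma BL: "bounded_lattice_on S" using UL0 unfolding UL_algebra_def by blast
lemma CM: "comm_monoid_on S" using UL0 unfolding UL_algebra_def by blast
lemma UL: "ff S \<in> carrier S \<and>
    (\<forall>x\<in>carrier S. \<forall>y\<in>carrier S. imp S x y \<in> carrier S) \<and>
    (\<forall>x\<in>carrier S. \<forall>y\<in>carrier S. \<forall>z\<in>carrier S.
        leq S (mult S x y) z \<longleftrightarrow> leq S y (imp S x z))" using UL0 unfolding UL_algebra_def by blast
lemma IU: "(\<forall>x\<in>carrier S. neg S (neg S x) = x) \<and>
    (\<forall>x\<in>carrier S. imp S x (unit S) = imp S (mult S x x) (unit S))" using iul unfolding IUL_omega_algebra_def by blast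

lemma meet_cl: "\<And>x y. x \<in> A \<Longrightarrow> y \<in> A \<Longrightarrow> meet S x y \<in> A"
  using BL CM UL IU lin unfolding bounded_lattice_on_def
    comm_monoid_on_def linearly_ordered_def neg_def by auto

lemma meet_comm: "\<And>x y. x \<in> A \<Longrightarrow> y \<in> A \<Longrightarrow> meet S x y = meet S y x"
  using BL CM UL IU lin unfolding bounded_lattice_on_def
    comm_monoid_on_def linearly_ordered_def neg_def by auto

lemma meet_assoc: "\<And>x y z. x \<in> A \<Longrightarrow> y \<in> A \<Longrightarrow> z \<in> A \<Longrightarrow> meet S (meet S x y) z = meet S x (meet S y z)"
  using BL CM UL IU lin unfolding bounded_lattice_on_def
    comm_monoid_on_def linearly_ordered_def neg_def by auto

lemma absorb: "\<And>x y. x \<in> A \<Longrightarrow> y \<in> A \<Longrightarrow> join S x (meet S x y) = x"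
  using BL CM UL IU lin unfolding bounded_lattice_on_def
    comm_monoid_on_def linearly_ordered_def neg_def by auto

lemma absorb2: "\<And>x y. x \<in> A \<Longrightarrow> y \<in> A \<Longrightarrow> meet S x (join S x y) = x"
  using BL CM UL IU lin unfolding bounded_lattice_on_def
    comm_monoid_on_def linearly_ordered_def neg_def by auto

lemma join_cl: "\<And>x y. x \<in> A \<Longrightarrow> y \<in> A \<Longrightarrow> join S x y \<in> A"
  using BL CM UL IU lin unfolding bounded_lattice_on_def
    comm_monoid_on_def linearly_ordered_def neg_def by auto

lemma bot_in: "bot S \<in> A"
  using BL CM UL IU lin unfolding bounded_lattice_on_def
    comm_monoid_on_def linearly_ordered_def neg_def by auto

lemma top_in: "top S \<in> A"
  using BL CM UL IU lin unfolding bounded_lattice_on_def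
    comm_monoid_on_def linearly_ordered_def neg_def by auto

lemma bot_le: "\<And>x. x \<in> A \<Longrightarrow> le (bot S) x"
  using BL CM UL IU lin unfolding bounded_lattice_on_def
    comm_monoid_on_def linearly_ordered_def neg_def by auto

lemma le_top: "\<And>x. x \<in> A \<Longrightarrow> le x (top S)"
  using BL CM UL IU lin unfolding bounded_lattice_on_def
    comm_monoid_on_def linearly_ordered_def neg_def by auto

lemma unit_in: "unit S \<in> A"
  using BL CM UL IU lin unfolding bounded_lattice_on_def
    comm_monoid_on_def linearly_ordered_def neg_def by auto

lemma ff_in: "ff S \<in> A"
  using BL CM UL IU lin unfolding bounded_lattice_on_def
    comm_monoid_on_def linearly_ordered_def neg_def by auto

lemma mult_cl: "\<And>x y. x \<in> A \<Longrightarrow> y \<in> A \<Longrightarrow> mu x y \<in> A"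
  using BL CM UL IU lin unfolding bounded_lattice_on_def
    comm_monoid_on_def linearly_ordered_def neg_def by auto

lemma mult_assoc: "\<And>x y z. x \<in> A \<Longrightarrow> y \<in> A \<Longrightarrow> z \<in> A \<Longrightarrow> mu (mu x y) z = mu x (mu y z)"
  using BL CM UL IU lin unfolding bounded_lattice_on_def
    comm_monoid_on_def linearly_ordered_def neg_def by auto

lemma mult_comm: "\<And>x y. x \<in> A \<Longrightarrow> y \<in> A \<Longrightarrow> mu x y = mu y x"
  using BL CM UL IU lin unfolding bounded_lattice_on_def
    comm_monoid_on_def linearly_ordered_def neg_def by auto

lemma unit_l: "\<And>x. x \<in> A \<Longrightarrow> mu (unit S) x = x"
  using BL CM UL IU lin unfolding bounded_lattice_on_def
    comm_monoid_on_def linearly_ordered_def neg_def by auto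

lemma imp_cl: "\<And>x y. x \<in> A \<Longrightarrow> y \<in> A \<Longrightarrow> imp S x y \<in> A"
  using BL CM UL IU lin unfolding bounded_lattice_on_def
    comm_monoid_on_def linearly_ordered_def neg_def by auto

lemma resid: "\<And>x y z. x \<in> A \<Longrightarrow> y \<in> A \<Longrightarrow> z \<in> A \<Longrightarrow> le (mu x y) z \<longleftrightarrow> le y (imp S x z)"
  using BL CM UL IU lin unfolding bounded_lattice_on_def
    comm_monoid_on_def linearly_ordered_def neg_def by auto

lemma negneg: "\<And>x. x \<in> A \<Longrightarrow> imp S (imp S x (ff S)) (ff S) = x"
  using BL CM UL IU lin unfolding bounded_lattice_on_def
    comm_monoid_on_def linearly_ordered_def neg_def by auto

lemma omega: "\<And>x. x \<in> A \<Longrightarrow> imp S x (unit S) = imp S (mu x x) (unit S)"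
  using BL CM UL IU lin unfolding bounded_lattice_on_def
    comm_monoid_on_def linearly_ordered_def neg_def by auto

lemma linear: "\<And>x y. x \<in> A \<Longrightarrow> y \<in> A \<Longrightarrow> le x y \<or> le y x"
  using BL CM UL IU lin unfolding bounded_lattice_on_def
    comm_monoid_on_def linearly_ordered_def neg_def by auto


lemma le_refl: "x \<in> A \<Longrightarrow> le x x"
  unfolding leq_def using absorb[of x "meet S x x"] absorb2[of x "meet S x x"] absorb[of x x]
  by (metis absorb absorb2 meet_cl)

lemma le_trans: "x \<in> A \<Longrightarrow> y \<in> A \<Longrightarrow> z \<in> A \<Longrightarrow> le x y \<Longrightarrow> le y z \<Longrightarrow> le x z"
  unfolding leq_def by (metis meet_assoc)

lemma mono_r: "x \<in> A \<Longrightarrow> y \<in> A \<Longrightarrow> y' \<in> A \<Longrightarrow> le y y' \<Longrightarrow> le (mu x y) (mu x y')"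
  by (metis le_refl le_trans mult_cl imp_cl resid)

lemma mono_l: "x \<in> A \<Longrightarrow> y \<in> A \<Longrightarrow> x' \<in> A \<Longrightarrow> le x x' \<Longrightarrow> le (mu x y) (mu x' y)"
  by (metis mono_r mult_comm)

lemma M_A: "x \<in> M \<Longrightarrow> x \<in> A"
  by (induction rule: gen_monoid.induct) (use unit_in BA mult_cl in auto)

lemma B_M: "b \<in> B \<Longrightarrow> b \<in> M" by (rule gen_base)

lemma Bs: "unit S \<in> B" "ff S \<in> B" "bot S \<in> B" "top S \<in> B" using Bc by auto

lemma mult_M: "a \<in> M \<Longrightarrow> c \<in> M \<Longrightarrow> mu a c \<in> M" by (rule gen_mult)
lemma unit_M: "unit S \<in> M" by (rule gen_unit)

lemma rint_mem: "c \<in> rint S B a b \<longleftrightarrow> c \<in> M \<and> le (mu a c) b"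
  unfolding rint_def by simp

lemma rint_down: "a \<in> M \<Longrightarrow> b \<in> B \<Longrightarrow> c \<in> rint S B a b \<Longrightarrow> c' \<in> M \<Longrightarrow> le c' c \<Longrightarrow> c' \<in> rint S B a b"
proof -
  assume a: "a \<in> M" "b \<in> B" "c \<in> rint S B a b" "c' \<in> M" "le c' c"
  have c: "c \<in> M" "le (mu a c) b" using a(3) rint_mem by auto
  have "le (mu a c') (mu a c)" using mono_r[of a c' c] a c M_A by blast
  hence "le (mu a c') b" using le_trans[of "mu a c'" "mu a c" b] c a M_A BA mult_cl by blast
  thus ?thesis using a(4) rint_mem by blast
qed

lemma Dbar_mem: "Y \<in> Dbar S B \<longleftrightarrow> (\<exists>a\<in>M. \<exists>b\<in>B. Y = rint S B a b)"
  unfolding Dbar_def by blast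

lemma Ccl_mem: "c \<in> Ccl S B X \<longleftrightarrow> c \<in> M \<and> (\<forall>a\<in>M. \<forall>b\<in>B. X \<subseteq> rint S B a b \<longrightarrow> c \<in> rint S B a b)"
  unfolding Ccl_def Dbar_mem by blast

lemma Ccl_M: "Ccl S B X \<subseteq> M" unfolding Ccl_def by blast
lemma Ccl_ext: "X \<subseteq> M \<Longrightarrow> X \<subseteq> Ccl S B X" by (auto simp: Ccl_mem)
lemma Ccl_mono: "X \<subseteq> Y \<Longrightarrow> Ccl S B X \<subseteq> Ccl S B Y" by (auto simp: Ccl_mem)

lemma Ccl_D: "Ccl S B X \<in> Dsets S B"
  unfolding Ccl_def Dsets_def by blast

lemma D_char: "X \<in> Dsets S B \<longleftrightarrow> X \<subseteq> M \<and> Ccl S B X \<subseteq> X"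
proof
  assume "X \<in> Dsets S B"
  then obtain \<chi> where ch: "\<chi> \<subseteq> Dbar S B" "X = M \<inter> \<Inter>\<chi>" unfolding Dsets_def by blast
  have "Ccl S B X \<subseteq> X"
  proof
    fix c assume c: "c \<in> Ccl S B X"
    have "c \<in> M" using c Ccl_M by blast
    moreover have "c \<in> Y" if "Y \<in> \<chi>" for Y
    proof -
      have "Y \<in> Dbar S B" "X \<subseteq> Y" using that ch by auto
      thus ?thesis using c unfolding Ccl_def by blast
    qed
    ultimately show "c \<in> X" using ch by blast
  qed
  thus "X \<subseteq> M \<and> Ccl S B X \<subseteq> X" using ch by blast
next
  assume a: "X \<subseteq> M \<and> Ccl S B X \<subseteq> X"
  hence "X = Ccl S B X" using Ccl_ext by blast
  thus "X \<in> Dsets S B" by (metis Ccl_D)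
qed

lemma D_M: "X \<in> Dsets S B \<Longrightarrow> X \<subseteq> M" using D_char[of X] by simp
lemma Ccl_id: "X \<in> Dsets S B \<Longrightarrow> Ccl S B X = X" using D_char[of X] Ccl_ext[of X] by simp

lemma rint_D: "a \<in> M \<Longrightarrow> b \<in> B \<Longrightarrow> rint S B a b \<in> Dsets S B"
proof -
  assume ab: "a \<in> M" "b \<in> B"
  have "rint S B a b \<subseteq> M" unfolding rint_def by blast
  moreover have "Ccl S B (rint S B a b) \<subseteq> rint S B a b"
  proof
    fix c assume "c \<in> Ccl S B (rint S B a b)"
    thus "c \<in> rint S B a b" unfolding Ccl_mem using ab by blast
  qed
  ultimately show ?thesis using D_char[of "rint S B a b"] by simp
qed

lemma D_down: "X \<in> Dsets S B \<Longrightarrow> x \<in> X \<Longrightarrow> c \<in> M \<Longrightarrow> le c x \<Longrightarrow> c \<in> X"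
proof -
  assume X: "X \<in> Dsets S B" and x: "x \<in> X" and c: "c \<in> M" "le c x"
  have "c \<in> Ccl S B X" unfolding Ccl_mem using c x rint_down by blast
  thus ?thesis using Ccl_id X by blast
qed

lemma D_chain: "X \<in> Dsets S B \<Longrightarrow> Y \<in> Dsets S B \<Longrightarrow> X \<subseteq> Y \<or> Y \<subseteq> X"
proof (rule ccontr)
  assume X: "X \<in> Dsets S B" and Y: "Y \<in> Dsets S B" and n: "\<not> (X \<subseteq> Y \<or> Y \<subseteq> X)"
  then obtain x y where xy: "x \<in> X" "x \<notin> Y" "y \<in> Y" "y \<notin> X" by blast
  have "x \<in> M" "y \<in> M" using xy X Y D_M by blast+
  thus False
  proof -
    assume m: "x \<in> M" "y \<in> M"
    have "le x y \<or> le y x" using linear m M_A by blast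
    thus False
    proof
      assume "le x y" thus False using D_down[OF Y xy(3) m(1)] xy by blast
    next
      assume "le y x" thus False using D_down[OF X xy(1) m(2)] xy by blast
    qed
  qed
qed

lemma down_rint: "down S B b = rint S B (unit S) b"
  unfolding down_def rint_def using unit_l M_A by auto

lemma impD_mem: "c \<in> impD S B X Y \<longleftrightarrow> c \<in> M \<and> (\<forall>x\<in>X. mu x c \<in> Y)"
  unfolding impD_def by auto

lemma down_mem: "c \<in> down S B b \<longleftrightarrow> c \<in> M \<and> le c b"
  unfolding down_def by simp

lemma tneg_mem: "X \<subseteq> M \<Longrightarrow> c \<in> tnegD S B X \<longleftrightarrow> c \<in> M \<and> (\<forall>x\<in>X. le (mu x c) (ff S))"
  unfolding tnegD_def impD_mem down_mem using mult_M by (metis subsetD)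

lemma tneg_anti: "X \<subseteq> Y \<Longrightarrow> tnegD S B Y \<subseteq> tnegD S B X"
  unfolding tnegD_def impD_def by auto

lemma tneg_M: "tnegD S B X \<subseteq> M" unfolding tnegD_def impD_def by auto

lemma tt_ext: "X \<subseteq> M \<Longrightarrow> X \<subseteq> tnegD S B (tnegD S B X)"
proof
  fix d assume XM: "X \<subseteq> M" and d: "d \<in> X"
  have "le (mu c d) (ff S)" if c: "c \<in> tnegD S B X" for c
  proof -
    have "le (mu d c) (ff S)" using c d XM unfolding tneg_mem[OF XM] by blast
    moreover have "mu d c = mu c d" using mult_comm M_A c d XM tneg_M by blast
    ultimately show ?thesis by simp
  qed
  thus "d \<in> tnegD S B (tnegD S B X)" unfolding tneg_mem[OF tneg_M] using d XM by blast
qed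

lemma tt_rint: assumes a: "a \<in> M" and b: "b \<in> B"
  shows "tnegD S B (tnegD S B (rint S B a b)) \<subseteq> rint S B a b"
proof
  fix d assume d: "d \<in> tnegD S B (tnegD S B (rint S B a b))"
  define nb where "nb = imp S b (ff S)"
  have nbB: "nb \<in> B" using Bneg b unfolding nb_def neg_def by blast
  have aA: "a \<in> A" and bA: "b \<in> A" and nbA: "nb \<in> A" using a b nbB M_A BA by auto
  have ffA: "ff S \<in> A" by (rule ff_in)
  define c where "c = mu a nb"
  have cM: "c \<in> M" unfolding c_def using a nbB B_M mult_M by blast
  have bnb: "le (mu b nb) (ff S)"
    using resid[OF bA nbA ffA] le_refl[OF nbA] unfolding nb_def by simp
  have rM: "rint S B a b \<subseteq> M" unfolding rint_def by blast
  have "c \<in> tnegD S B (rint S B a b)"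
    unfolding tneg_mem[OF rM]
  proof (intro conjI ballI cM)
    fix x assume x: "x \<in> rint S B a b"
    hence xM: "x \<in> M" and ax: "le (mu a x) b" unfolding rint_mem by auto
    have xA: "x \<in> A" using xM M_A by blast
    have "mu x c = mu (mu a x) nb" unfolding c_def
      using mult_assoc mult_comm aA xA nbA by metis
    moreover have "le (mu (mu a x) nb) (mu b nb)"
      using mono_l[of "mu a x" nb b] ax aA xA nbA bA mult_cl by blast
    ultimately show "le (mu x c) (ff S)"
      using le_trans[of "mu x c" "mu b nb" "ff S"] bnb mult_cl xA aA nbA bA cM M_A ffA by metis
  qed
  hence cd: "le (mu c d) (ff S)" and dM: "d \<in> M" using d unfolding tneg_mem[OF tneg_M] by blast+
  have dA: "d \<in> A" using dM M_A by blast
  have "mu c d = mu nb (mu a d)" unfolding c_def using mult_assoc mult_comm aA dA nbA by metis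
  hence "le (mu nb (mu a d)) (ff S)" using cd by simp
  hence "le (mu a d) (imp S nb (ff S))" using resid[of nb "mu a d" "ff S"] nbA aA dA mult_cl ffA by blast
  moreover have "imp S nb (ff S) = b" unfolding nb_def using negneg bA by blast
  ultimately show "d \<in> rint S B a b" unfolding rint_mem using dM by simp
qed

lemma tt_rint_eq: "a \<in> M \<Longrightarrow> b \<in> B \<Longrightarrow> rint S B a b = tnegD S B (tnegD S B (rint S B a b))"
  using tt_rint tt_ext[of "rint S B a b"] unfolding rint_def by blast

lemma tt_D: assumes X: "X \<in> Dsets S B" shows "X = tnegD S B (tnegD S B X)"
proof
  show "X \<subseteq> tnegD S B (tnegD S B X)" using tt_ext D_M X by blast
  show "tnegD S B (tnegD S B X) \<subseteq> X"
  proof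
    fix c assume c: "c \<in> tnegD S B (tnegD S B X)"
    have cM: "c \<in> M" using c tneg_M by blast
    have "c \<in> Ccl S B X" unfolding Ccl_mem
    proof (intro conjI cM ballI impI)
      fix a b assume ab: "a \<in> M" "b \<in> B" and sub: "X \<subseteq> rint S B a b"
      have "tnegD S B (tnegD S B X) \<subseteq> tnegD S B (tnegD S B (rint S B a b))"
        by (rule tneg_anti[OF tneg_anti[OF sub]])
      thus "c \<in> rint S B a b" using c tt_rint[OF ab] by blast
    qed
    thus "c \<in> X" using Ccl_id X by blast
  qed
qed

abbreviation PP :: "'a set \<Rightarrow> 'a set \<Rightarrow> 'a set" where
  "PP X Y \<equiv> {mu x y | x y. x \<in> X \<and> y \<in> Y}"

lemma PP_M: "X \<subseteq> M \<Longrightarrow> Y \<subseteq> M \<Longrightarrow> PP X Y \<subseteq> M"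
  using mult_M by blast

lemma PP_comm: "X \<subseteq> M \<Longrightarrow> Y \<subseteq> M \<Longrightarrow> PP X Y = PP Y X"
proof -
  assume XY: "X \<subseteq> M" "Y \<subseteq> M"
  have e: "mu x y = mu y x" if "x \<in> M" "y \<in> M" for x y using that M_A mult_comm by blast
  show ?thesis
  proof (intro equalityI subsetI)
    fix w assume "w \<in> PP X Y"
    then obtain x y where "w = mu x y" "x \<in> X" "y \<in> Y" by blast
    hence "w = mu y x" "x \<in> X" "y \<in> Y" using e[of x y] XY by (auto simp: subset_iff)
    thus "w \<in> PP Y X" by blast
  next
    fix w assume "w \<in> PP Y X"
    then obtain x y where "w = mu y x" "x \<in> X" "y \<in> Y" by blast
    hence "w = mu x y" "x \<in> X" "y \<in> Y" using e[of x y] XY by (auto simp: subset_iff)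
    thus "w \<in> PP X Y" by blast
  qed
qed

lemma PP_mono: "X \<subseteq> X' \<Longrightarrow> PP X Y \<subseteq> PP X' Y" by blast

lemma PP_Ccl_sub: assumes XM: "X \<subseteq> M" and ZM: "Z \<subseteq> M"
  shows "PP (Ccl S B X) Z \<subseteq> Ccl S B (PP X Z)"
proof
  fix w assume "w \<in> PP (Ccl S B X) Z"
  then obtain c z where w: "w = mu c z" and c: "c \<in> Ccl S B X" and z: "z \<in> Z" by blast
  have cM: "c \<in> M" using c Ccl_M by blast
  have zM: "z \<in> M" using z ZM by blast
  show "w \<in> Ccl S B (PP X Z)" unfolding Ccl_mem
  proof (intro conjI ballI impI)
    show "w \<in> M" using w cM zM mult_M by blast
    fix a b assume a: "a \<in> M" and b: "b \<in> B" and sub: "PP X Z \<subseteq> rint S B a b"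
    have azM: "mu a z \<in> M" using a zM mult_M by blast
    have "X \<subseteq> rint S B (mu a z) b"
    proof
      fix x assume x: "x \<in> X"
      have "mu x z \<in> rint S B a b" using sub x z by blast
      hence "le (mu a (mu x z)) b" unfolding rint_mem by blast
      moreover have "mu a (mu x z) = mu (mu a z) x"
        using mult_assoc mult_comm M_A a zM x XM by (metis subsetD)
      ultimately show "x \<in> rint S B (mu a z) b" unfolding rint_mem using x XM by auto
    qed
    hence "c \<in> rint S B (mu a z) b" using c azM b unfolding Ccl_mem by blast
    hence "le (mu (mu a z) c) b" unfolding rint_mem by blast
    moreover have "mu (mu a z) c = mu a w"
      unfolding w using mult_assoc mult_comm M_A a zM cM by metis
    ultimately show "w \<in> rint S B a b" unfolding rint_mem using \<open>w \<in> M\<close> by simp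
  qed
qed

lemma Ccl_idem: "Ccl S B (Ccl S B X) = Ccl S B X" using Ccl_id Ccl_D by blast

lemma Ccl_PP_l: assumes XM: "X \<subseteq> M" and ZM: "Z \<subseteq> M"
  shows "Ccl S B (PP (Ccl S B X) Z) = Ccl S B (PP X Z)"
proof
  show "Ccl S B (PP (Ccl S B X) Z) \<subseteq> Ccl S B (PP X Z)"
    using Ccl_mono[OF PP_Ccl_sub[OF XM ZM]] Ccl_idem by simp
  show "Ccl S B (PP X Z) \<subseteq> Ccl S B (PP (Ccl S B X) Z)"
    by (rule Ccl_mono[OF PP_mono[OF Ccl_ext[OF XM]]])
qed

lemma multD_assoc: assumes X: "X \<subseteq> M" and Y: "Y \<subseteq> M" and Z: "Z \<subseteq> M"
  shows "multD S B (multD S B X Y) Z = multD S B X (multD S B Y Z)"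
proof -
  have "multD S B (multD S B X Y) Z = Ccl S B (PP (PP X Y) Z)"
    unfolding multD_def using Ccl_PP_l[OF PP_M[OF X Y] Z] .
  moreover have "multD S B X (multD S B Y Z) = Ccl S B (PP (PP Y Z) X)"
    unfolding multD_def using Ccl_PP_l[OF PP_M[OF Y Z] X] PP_comm[OF X Ccl_M] by simp
  moreover have "PP (PP X Y) Z = PP (PP Y Z) X"
  proof -
    have e: "mu (mu x y) z = mu (mu y z) x" if "x \<in> X" "y \<in> Y" "z \<in> Z" for x y z
      using that X Y Z M_A mult_assoc mult_comm by (metis subsetD)
    show ?thesis
    proof (intro equalityI subsetI)
      fix w assume "w \<in> PP (PP X Y) Z"
      then obtain x y z where "w = mu (mu x y) z" "x \<in> X" "y \<in> Y" "z \<in> Z" by blast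
      hence "w = mu (mu y z) x" "x \<in> X" "y \<in> Y" "z \<in> Z" using e[of x y z] by auto
      thus "w \<in> PP (PP Y Z) X" by blast
    next
      fix w assume "w \<in> PP (PP Y Z) X"
      then obtain x y z where "w = mu (mu y z) x" "x \<in> X" "y \<in> Y" "z \<in> Z" by blast
      hence "w = mu (mu x y) z" "x \<in> X" "y \<in> Y" "z \<in> Z" using e[of x y z] by auto
      thus "w \<in> PP (PP X Y) Z" by blast
    qed
  qed
  ultimately show ?thesis by simp
qed

lemma multD_comm: "X \<subseteq> M \<Longrightarrow> Y \<subseteq> M \<Longrightarrow> multD S B X Y = multD S B Y X"
  unfolding multD_def using PP_comm by simp

lemma down_e_D: "down S B (unit S) \<in> Dsets S B"
  using down_rint rint_D unit_M Bs by simp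

lemma down_e_sub: "down S B (unit S) \<subseteq> M" unfolding down_def by blast

lemma multD_unit: assumes X: "X \<in> Dsets S B" shows "multD S B (down S B (unit S)) X = X"
proof -
  have XM: "X \<subseteq> M" using D_M X by blast
  have "PP (down S B (unit S)) X = X"
  proof
    show "PP (down S B (unit S)) X \<subseteq> X"
    proof
      fix w assume "w \<in> PP (down S B (unit S)) X"
      then obtain c x where w: "w = mu c x" and c: "c \<in> M" "le c (unit S)" and x: "x \<in> X"
        unfolding down_mem by blast
      have xA: "x \<in> A" using x XM M_A by blast
      have cA: "c \<in> A" using c M_A by blast
      have "le (mu c x) (mu (unit S) x)" using mono_l[OF cA xA unit_in c(2)] .
      hence "le w x" using unit_l xA w by simp
      moreover have "w \<in> M" using w c x XM mult_M by blast
      ultimately show "w \<in> X" using D_down[OF X x] by blast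
    qed
    show "X \<subseteq> PP (down S B (unit S)) X"
    proof
      fix x assume x: "x \<in> X"
      have "x = mu (unit S) x" using unit_l x XM M_A by (metis subsetD)
      moreover have "unit S \<in> down S B (unit S)" unfolding down_mem using unit_M le_refl unit_in by blast
      ultimately show "x \<in> PP (down S B (unit S)) X" using x by blast
    qed
  qed
  thus ?thesis unfolding multD_def using Ccl_id X by simp
qed

lemma impD_M: "impD S B X Z \<subseteq> M" unfolding impD_def by blast

lemma impD_D: assumes X: "X \<subseteq> M" and Z: "Z \<in> Dsets S B" shows "impD S B X Z \<in> Dsets S B"
proof -
  let ?I = "impD S B X Z"
  have ZM: "Z \<subseteq> M" using Z D_M by blast
  have "Ccl S B ?I \<subseteq> ?I"
  proof
    fix c assume c: "c \<in> Ccl S B ?I"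
    have cM: "c \<in> M" using c Ccl_M by blast
    have "mu x c \<in> Z" if x: "x \<in> X" for x
    proof -
      have xM: "x \<in> M" using x X by blast
      have "mu x c \<in> Ccl S B Z" unfolding Ccl_mem
      proof (intro conjI ballI impI)
        show xcM: "mu x c \<in> M" using xM cM mult_M by blast
        fix a b assume a: "a \<in> M" and b: "b \<in> B" and sub: "Z \<subseteq> rint S B a b"
        have axM: "mu a x \<in> M" using a xM mult_M by blast
        have "?I \<subseteq> rint S B (mu a x) b"
        proof
          fix c' assume c': "c' \<in> ?I"
          hence c'M: "c' \<in> M" and "mu x c' \<in> Z" using x unfolding impD_mem by auto
          hence "mu x c' \<in> rint S B a b" using sub by blast
          hence "le (mu a (mu x c')) b" unfolding rint_mem by blast
          moreover have "mu a (mu x c') = mu (mu a x) c'" using mult_assoc M_A a xM c'M by metis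
          ultimately show "c' \<in> rint S B (mu a x) b" unfolding rint_mem using c'M by simp
        qed
        hence "c \<in> rint S B (mu a x) b" using c axM b unfolding Ccl_mem by blast
        hence "le (mu (mu a x) c) b" unfolding rint_mem by blast
        moreover have "mu a (mu x c) = mu (mu a x) c" using mult_assoc M_A a xM cM by metis
        ultimately show "mu x c \<in> rint S B a b" unfolding rint_mem using xcM by simp
      qed
      thus ?thesis using Ccl_id Z by blast
    qed
    thus "c \<in> ?I" unfolding impD_mem using cM by blast
  qed
  thus ?thesis using D_char[of ?I] impD_M by simp
qed

lemma impD_anti: "X \<subseteq> X' \<Longrightarrow> impD S B X' Z \<subseteq> impD S B X Z"
  unfolding impD_def by auto

lemma impD_Ccl: assumes W: "W \<subseteq> M" and Z: "Z \<in> Dsets S B"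
  shows "impD S B (Ccl S B W) Z = impD S B W Z"
proof
  show "impD S B (Ccl S B W) Z \<subseteq> impD S B W Z" by (rule impD_anti[OF Ccl_ext[OF W]])
  show "impD S B W Z \<subseteq> impD S B (Ccl S B W) Z"
  proof
    fix c assume c: "c \<in> impD S B W Z"
    hence cM: "c \<in> M" unfolding impD_mem by blast
    let ?I = "impD S B {c} Z"
    have ID: "?I \<in> Dsets S B" using impD_D[OF _ Z] cM by blast
    have "W \<subseteq> ?I"
    proof
      fix w assume w: "w \<in> W"
      have "mu w c \<in> Z" using c w unfolding impD_mem by blast
      moreover have "mu w c = mu c w" using mult_comm M_A w W cM by (metis subsetD)
      ultimately show "w \<in> ?I" unfolding impD_mem using w W by auto
    qed
    hence CI: "Ccl S B W \<subseteq> ?I" using Ccl_mono Ccl_id[OF ID] by metis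
    moreover have "mu w c \<in> Z" if w: "w \<in> Ccl S B W" for w
    proof -
      have "mu w c = mu c w" using w Ccl_M mult_comm M_A cM by (metis subsetD)
      moreover have "w \<in> ?I" using w CI by blast
      ultimately show ?thesis unfolding impD_mem by simp
    qed
    ultimately show "c \<in> impD S B (Ccl S B W) Z" unfolding impD_mem[of c] using cM by blast
  qed
qed

lemma Dalg_simps: "carrier (Dalg S B) = Dsets S B" "meet (Dalg S B) = meetD" "join (Dalg S B) = joinD S B"
  "mult (Dalg S B) = multD S B" "imp (Dalg S B) = impD S B" "unit (Dalg S B) = down S B (unit S)"
  "ff (Dalg S B) = down S B (ff S)" "bot (Dalg S B) = down S B (bot S)" "top (Dalg S B) = down S B (top S)"
  by (simp_all add: Dalg_def)

lemma leqD: "leq (Dalg S B) X Y \<longleftrightarrow> X \<subseteq> Y"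
  unfolding leq_def Dalg_simps meetD_def by blast

lemma joinD_Un: assumes X: "X \<in> Dsets S B" and Y: "Y \<in> Dsets S B" shows "joinD S B X Y = X \<union> Y"
proof -
  have "X \<union> Y = X \<or> X \<union> Y = Y" using D_chain[OF X Y] by blast
  hence "X \<union> Y \<in> Dsets S B" using X Y by metis
  thus ?thesis unfolding joinD_def using Ccl_id by blast
qed

lemma meet_D: assumes X: "X \<in> Dsets S B" and Y: "Y \<in> Dsets S B" shows "X \<inter> Y \<in> Dsets S B"
proof -
  have "X \<inter> Y = X \<or> X \<inter> Y = Y" using D_chain[OF X Y] by blast
  thus ?thesis using X Y by metis
qed

lemma M_D: "M \<in> Dsets S B" using D_char[of M] Ccl_M by simp

lemma down_top: "down S B (top S) = M"
  unfolding down_def using le_top M_A by blast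

lemma down_D: "b \<in> B \<Longrightarrow> down S B b \<in> Dsets S B"
  using down_rint rint_D unit_M by simp

lemma down_sub: "down S B b \<subseteq> M" unfolding down_def by blast

lemma bot_sub: assumes X: "X \<in> Dsets S B" shows "down S B (bot S) \<subseteq> X"
proof
  fix c assume c: "c \<in> down S B (bot S)"
  hence cM: "c \<in> M" and cb: "le c (bot S)" unfolding down_mem by auto
  have cA: "c \<in> A" using cM M_A by blast
  have "c \<in> Ccl S B X" unfolding Ccl_mem
  proof (intro conjI cM ballI impI)
    fix a b assume a: "a \<in> M" and b: "b \<in> B" and "X \<subseteq> rint S B a b"
    have aA: "a \<in> A" and bA: "b \<in> A" using a b M_A BA by auto
    have "le (bot S) (imp S a b)" using bot_le imp_cl aA bA by blast
    hence "le c (imp S a b)" using le_trans[of c "bot S" "imp S a b"] cb cA bot_in imp_cl aA bA by blast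
    hence "le (mu a c) b" using resid aA cA bA by blast
    thus "c \<in> rint S B a b" unfolding rint_mem using cM by blast
  qed
  thus "c \<in> X" using Ccl_id X by blast
qed

lemma impXX: assumes X: "X \<in> Dsets S B" shows "down S B (unit S) \<subseteq> impD S B X X"
proof
  fix c assume c: "c \<in> down S B (unit S)"
  hence cM: "c \<in> M" and ce: "le c (unit S)" unfolding down_mem by auto
  have cA: "c \<in> A" using cM M_A by blast
  have "mu x c \<in> X" if x: "x \<in> X" for x
  proof -
    have xM: "x \<in> M" using x X D_M by blast
    have xA: "x \<in> A" using xM M_A by blast
    have "le (mu c x) (mu (unit S) x)" using mono_l[OF cA xA unit_in ce] .
    hence "le (mu x c) x" using unit_l[OF xA] mult_comm[OF xA cA] by simp
    thus ?thesis using D_down[OF X x] mult_M[OF xM cM] by blast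
  qed
  thus "c \<in> impD S B X X" unfolding impD_mem using cM by blast
qed

lemma lam_e: assumes u: "u \<in> Dsets S B" and W: "W \<in> Dsets S B" and We: "down S B (unit S) \<subseteq> W"
  shows "conj_lam (Dalg S B) u W = down S B (unit S)"
proof -
  have uM: "u \<subseteq> M" and WM: "W \<subseteq> M" using u W D_M by auto
  have "down S B (unit S) \<subseteq> impD S B u (multD S B W u)"
  proof
    fix c assume c: "c \<in> down S B (unit S)"
    hence cM: "c \<in> M" unfolding down_mem by blast
    have "mu x c \<in> multD S B W u" if x: "x \<in> u" for x
    proof -
      have "mu x c = mu c x" using mult_comm M_A cM x uM by (metis subsetD)
      moreover have "mu c x \<in> PP W u" using c We x by blast
      ultimately have "mu x c \<in> PP W u" by simp
      thus ?thesis unfolding multD_def using Ccl_ext[OF PP_M[OF WM uM]] by blast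
    qed
    thus "c \<in> impD S B u (multD S B W u)" unfolding impD_mem using cM by blast
  qed
  thus ?thesis unfolding conj_lam_def Dalg_simps meetD_def by blast
qed

lemma lam_sub: "conj_lam (Dalg S B) u W \<subseteq> down S B (unit S)"
  unfolding conj_lam_def Dalg_simps meetD_def by blast

lemma join_e: assumes Z: "Z \<subseteq> down S B (unit S)"
  shows "joinD S B (down S B (unit S)) Z = down S B (unit S)" "joinD S B Z (down S B (unit S)) = down S B (unit S)"
proof -
  have "down S B (unit S) \<union> Z = down S B (unit S)" "Z \<union> down S B (unit S) = down S B (unit S)" using Z by blast+
  thus "joinD S B (down S B (unit S)) Z = down S B (unit S)" "joinD S B Z (down S B (unit S)) = down S B (unit S)"
    unfolding joinD_def using Ccl_id[OF down_e_D] by simp_all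
qed

lemma prelin: assumes X: "X \<in> Dsets S B" and Y: "Y \<in> Dsets S B" and u: "u \<in> Dsets S B" and v: "v \<in> Dsets S B"
  shows "joinD S B (conj_lam (Dalg S B) u (impD S B (joinD S B X Y) X))
                   (conj_lam (Dalg S B) v (impD S B (joinD S B X Y) Y)) = down S B (unit S)"
proof (cases "Y \<subseteq> X")
  case True
  hence j: "joinD S B X Y = X" using joinD_Un[OF X Y] by blast
  have "conj_lam (Dalg S B) u (impD S B X X) = down S B (unit S)"
    using lam_e[OF u impD_D[OF D_M[OF X] X] impXX[OF X]] .
  thus ?thesis unfolding j using join_e(1)[OF lam_sub] by simp
next
  case False
  hence "X \<subseteq> Y" using D_chain[OF X Y] by blast
  hence j: "joinD S B X Y = Y" using joinD_Un[OF X Y] by blast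
  have "conj_lam (Dalg S B) v (impD S B Y Y) = down S B (unit S)"
    using lam_e[OF v impD_D[OF D_M[OF Y] Y] impXX[OF Y]] .
  thus ?thesis unfolding j using join_e(2)[OF lam_sub] by simp
qed

lemma omega_D: assumes X: "X \<in> Dsets S B"
  shows "impD S B X (down S B (unit S)) = impD S B (multD S B X X) (down S B (unit S))"
proof -
  have XM: "X \<subseteq> M" using X D_M by blast
  have r: "impD S B (multD S B X X) (down S B (unit S)) = impD S B (PP X X) (down S B (unit S))"
    unfolding multD_def using impD_Ccl[OF PP_M[OF XM XM] down_e_D] .
  have eA: "unit S \<in> A" by (rule unit_in)
  have "c \<in> impD S B X (down S B (unit S)) \<longleftrightarrow> c \<in> impD S B (PP X X) (down S B (unit S))" for c
  proof (cases "c \<in> M")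
    case False thus ?thesis unfolding impD_mem by blast
  next
    case cM: True
    have cA: "c \<in> A" using cM M_A by blast
    have k: "mu x c \<in> down S B (unit S) \<longleftrightarrow> le c (imp S x (unit S))" if "x \<in> M" for x
      using that cM mult_M M_A resid[of x c "unit S"] cA eA unfolding down_mem by blast
    show ?thesis
    proof
      assume c: "c \<in> impD S B X (down S B (unit S))"
      have "mu w c \<in> down S B (unit S)" if w: "w \<in> PP X X" for w
      proof -
        obtain x y where w: "w = mu x y" and x: "x \<in> X" and y: "y \<in> X" using w by blast
        have xM: "x \<in> M" and yM: "y \<in> M" using x y XM by auto
        have xA: "x \<in> A" and yA: "y \<in> A" using xM yM M_A by auto
        have wM: "w \<in> M" using w xM yM mult_M by blast
        have key: "le (mu (mu z z') c) (unit S)" if z: "z \<in> X" "z' \<in> X" "z \<in> M" "z' \<in> M" "le z z'" for z z'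
        proof -
          have zA: "z \<in> A" and z'A: "z' \<in> A" using z M_A by auto
          have "le c (imp S z' (unit S))" using k[OF z(4)] c z(2) unfolding impD_mem by blast
          hence "le c (imp S (mu z' z') (unit S))" using omega[OF z'A] by simp
          hence h: "le (mu (mu z' z') c) (unit S)" using resid[of "mu z' z'" c "unit S"] z'A cA eA mult_cl by blast
          have "le (mu z z') (mu z' z')" using mono_l[OF zA z'A z'A z(5)] .
          hence "le (mu (mu z z') c) (mu (mu z' z') c)" using mono_l[of "mu z z'" c "mu z' z'"] zA z'A cA mult_cl by blast
          thus ?thesis using le_trans h mult_cl zA z'A cA eA by metis
        qed
        have "le (mu w c) (unit S)"
        proof (cases "le x y")
          case True thus ?thesis using key[OF x y xM yM] w by simp
        next
          case False
          hence "le y x" using linear xA yA by blast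
          moreover have "mu y x = w" using w mult_comm xA yA by simp
          ultimately show ?thesis using key[OF y x yM xM] by simp
        qed
        thus ?thesis unfolding down_mem using wM cM mult_M by blast
      qed
      thus "c \<in> impD S B (PP X X) (down S B (unit S))" unfolding impD_mem using cM by blast
    next
      assume c: "c \<in> impD S B (PP X X) (down S B (unit S))"
      have "mu x c \<in> down S B (unit S)" if x: "x \<in> X" for x
      proof -
        have xM: "x \<in> M" using x XM by blast
        have xA: "x \<in> A" using xM M_A by blast
        have "mu x x \<in> PP X X" using x by blast
        hence "mu (mu x x) c \<in> down S B (unit S)" using c unfolding impD_mem by blast
        hence "le c (imp S (mu x x) (unit S))" using k[OF mult_M[OF xM xM]] by blast
        hence "le c (imp S x (unit S))" using omega[OF xA] by simp
        thus ?thesis using k[OF xM] by blast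
      qed
      thus "c \<in> impD S B X (down S B (unit S))" unfolding impD_mem using cM by blast
    qed
  qed
  thus ?thesis using r by blast
qed

lemma residD: assumes X: "X \<in> Dsets S B" and Y: "Y \<in> Dsets S B" and Z: "Z \<in> Dsets S B"
  shows "multD S B X Y \<subseteq> Z \<longleftrightarrow> Y \<subseteq> impD S B X Z"
proof -
  have XM: "X \<subseteq> M" and YM: "Y \<subseteq> M" using X Y D_M by auto
  have "multD S B X Y \<subseteq> Z \<longleftrightarrow> PP X Y \<subseteq> Z"
  proof
    assume "multD S B X Y \<subseteq> Z" thus "PP X Y \<subseteq> Z"
      unfolding multD_def using Ccl_ext[OF PP_M[OF XM YM]] by blast
  next
    assume "PP X Y \<subseteq> Z" hence "Ccl S B (PP X Y) \<subseteq> Ccl S B Z" by (rule Ccl_mono)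
    thus "multD S B X Y \<subseteq> Z" unfolding multD_def using Ccl_id[OF Z] by simp
  qed
  also have "\<dots> \<longleftrightarrow> Y \<subseteq> impD S B X Z"
  proof
    assume h: "PP X Y \<subseteq> Z"
    show "Y \<subseteq> impD S B X Z"
    proof
      fix y assume y: "y \<in> Y"
      have "mu x y \<in> Z" if "x \<in> X" for x using h that y by blast
      thus "y \<in> impD S B X Z" unfolding impD_mem using y YM by blast
    qed
  next
    assume h: "Y \<subseteq> impD S B X Z"
    show "PP X Y \<subseteq> Z"
    proof
      fix w assume "w \<in> PP X Y"
      then obtain x y where w: "w = mu x y" "x \<in> X" "y \<in> Y" by blast
      hence "y \<in> impD S B X Z" using h by blast
      thus "w \<in> Z" unfolding impD_mem using w by blast
    qed
  qed
  finally show ?thesis .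
qed

lemma BL_D: "bounded_lattice_on (Dalg S B)"
  unfolding bounded_lattice_on_def Dalg_simps leqD
proof (intro conjI ballI)
  fix x y assume x: "x \<in> Dsets S B" and y: "y \<in> Dsets S B"
  show "meetD x y \<in> Dsets S B" unfolding meetD_def using meet_D x y by blast
  show "joinD S B x y \<in> Dsets S B" unfolding joinD_def by (rule Ccl_D)
  show "meetD x y = meetD y x" unfolding meetD_def by blast
  show "joinD S B x y = joinD S B y x" unfolding joinD_def by (simp add: Un_commute)
  show "meetD x (joinD S B x y) = x" unfolding meetD_def joinD_Un[OF x y] by blast
  have "x \<inter> y \<in> Dsets S B" using meet_D x y by blast
  thus "joinD S B x (meetD x y) = x" unfolding meetD_def using joinD_Un[OF x] by blast
  fix z assume z: "z \<in> Dsets S B"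
  show "meetD (meetD x y) z = meetD x (meetD y z)" unfolding meetD_def by blast
  have "x \<union> y \<in> Dsets S B" using joinD_Un[OF x y] Ccl_D unfolding joinD_def by metis
  moreover have "y \<union> z \<in> Dsets S B" using joinD_Un[OF y z] Ccl_D unfolding joinD_def by metis
  ultimately show "joinD S B (joinD S B x y) z = joinD S B x (joinD S B y z)"
    using joinD_Un x y z by (simp add: Un_assoc)
next
  show "down S B (bot S) \<in> Dsets S B" using down_D Bs by blast
  show "down S B (top S) \<in> Dsets S B" using down_top M_D by simp
  fix x assume x: "x \<in> Dsets S B"
  show "down S B (bot S) \<subseteq> x" using bot_sub x by blast
  show "x \<subseteq> down S B (top S)" using down_top D_M x by simp
qed

lemma CM_D: "comm_monoid_on (Dalg S B)"
  unfolding comm_monoid_on_def Dalg_simps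
proof (intro conjI ballI)
  show "down S B (unit S) \<in> Dsets S B" by (rule down_e_D)
  fix x y assume x: "x \<in> Dsets S B" and y: "y \<in> Dsets S B"
  show "multD S B x y \<in> Dsets S B" unfolding multD_def by (rule Ccl_D)
  show "multD S B x y = multD S B y x" using multD_comm D_M x y by blast
  fix z assume z: "z \<in> Dsets S B"
  show "multD S B (multD S B x y) z = multD S B x (multD S B y z)" using multD_assoc D_M x y z by blast
next
  fix x assume x: "x \<in> Dsets S B"
  show "multD S B (down S B (unit S)) x = x" using multD_unit x by blast
qed

lemma Dalg_IUL: "IUL_omega_algebra (Dalg S B)"
  unfolding IUL_omega_algebra_def UL_algebra_def
proof (intro conjI ballI BL_D CM_D)
  show "ff (Dalg S B) \<in> carrier (Dalg S B)" unfolding Dalg_simps using down_D Bs by blast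
  fix x y assume x: "x \<in> carrier (Dalg S B)" and y: "y \<in> carrier (Dalg S B)"
  show "imp (Dalg S B) x y \<in> carrier (Dalg S B)" using x y impD_D D_M unfolding Dalg_simps by blast
  fix z assume z: "z \<in> carrier (Dalg S B)"
  show "leq (Dalg S B) (mult (Dalg S B) x y) z = leq (Dalg S B) y (imp (Dalg S B) x z)"
    unfolding leqD using residD x y z unfolding Dalg_simps by blast
next
  fix x y u v assume x: "x \<in> carrier (Dalg S B)" and y: "y \<in> carrier (Dalg S B)"
    and u: "u \<in> carrier (Dalg S B)" and v: "v \<in> carrier (Dalg S B)"
  show "join (Dalg S B) (conj_lam (Dalg S B) u (imp (Dalg S B) (join (Dalg S B) x y) x))
        (conj_lam (Dalg S B) v (imp (Dalg S B) (join (Dalg S B) x y) y)) = unit (Dalg S B)"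
    using prelin x y u v unfolding Dalg_simps by blast
next
  fix x assume x: "x \<in> carrier (Dalg S B)"
  show "neg (Dalg S B) (neg (Dalg S B) x) = x"
    using tt_D x unfolding neg_def Dalg_simps tnegD_def by metis
  show "imp (Dalg S B) x (unit (Dalg S B)) = imp (Dalg S B) (mult (Dalg S B) x x) (unit (Dalg S B))"
    using omega_D x unfolding Dalg_simps by blast
qed

lemma main: "(\<forall>b\<in>B. down S B b = tnegD S B (tnegD S B (down S B b)))
    \<and> (\<forall>a\<in>gen_monoid S B. \<forall>b\<in>B. rint S B a b = tnegD S B (tnegD S B (rint S B a b)))
    \<and> (\<forall>X\<in>Dsets S B. X = tnegD S B (tnegD S B X))
    \<and> IUL_omega_algebra (Dalg S B)"
proof (intro conjI ballI)
  fix b assume b: "b \<in> B"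
  show "down S B b = tnegD S B (tnegD S B (down S B b))"
    unfolding down_rint using tt_rint_eq[OF unit_M b] .
next
  fix a b assume "a \<in> M" "b \<in> B"
  thus "rint S B a b = tnegD S B (tnegD S B (rint S B a b))" by (rule tt_rint_eq)
next
  fix X assume "X \<in> Dsets S B" thus "X = tnegD S B (tnegD S B X)" by (rule tt_D)
next
  show "IUL_omega_algebra (Dalg S B)" by (rule Dalg_IUL)
qed

end

theorem lemma3p9:
  fixes S :: "'a ul_struct" and B :: "'a set"
  assumes "IUL_omega_algebra S" and "linearly_ordered S"
    and "B \<subseteq> carrier S"
    and "{unit S, ff S, bot S, top S} \<subseteq> B"
    and "\<forall>b\<in>B. neg S b \<in> B"
  shows "(\<forall>b\<in>B. down S B b = tnegD S B (tnegD S B (down S B b)))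
    \<and> (\<forall>a\<in>gen_monoid S B. \<forall>b\<in>B. rint S B a b = tnegD S B (tnegD S B (rint S B a b)))
    \<and> (\<forall>X\<in>Dsets S B. X = tnegD S B (tnegD S B X))
    \<and> IUL_omega_algebra (Dalg S B)"
proof -
  interpret LL S B using assms by (unfold_locales) auto
  show ?thesis by (rule main)
qed

end
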